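(* Let $Z$ be a time-inhomogeneous Markov chain on $\{0,1,2,\dots\}$ which at step $t$ moves from $0$ to $0$ with probability $\alpha_{t0}$ and to $1$ with probability $1-\alpha_{t0}$, and from $i\ge1$ to $i-1$ with probability $\alpha_{ti}$ and to $i+1$ with probability $1-\alpha_{ti}$. Let $\hat Z$ be the time-homogeneous random walk on $\{0,1,2,\dots\}$ which moves from $0$ to $1$ with probability $1$ and from $i\ge1$ to $i-1$ with probability $p$ and to $i+1$ with probability $1-p$. Let $C=\{0\}$ and let $g^{(t)}_n$, $n\ge1$, be the distribution of the time of the first return to $0$ after time $t$ for $Z$ given $Z_t=0$, i.e. $g^{(t)}_n=\mathbb{P}\{Z_{t+1}\ne0,\dots,Z_{t+n-1}\ne0,Z_{t+n}=0\mid Z_t=0\}$. Assume that $p>1/2$ and $p(1-p)\ge(1-\alpha_{ti})\alpha_{sj}$ for all $t,s,i,j$. Let $f_n=\hat{\mathbb{P}}\{\hat Z_0=0,\hat Z_1\ne0,\dots,\hat Z_{n-1}\ne0,\hat Z_n=0\}$ (probability of first return to $0$ at time $n$ for $\hat Z$ started at $0$), and set $\hat g_1=1$, $\hat g_n=f_n/p$ for $n>1$. Then for all $t$ and $k$, \[G^{(t)}_k\le\hat G_k,\qquad\text{where } G^{(t)}_k=\sum_{m>k}g^{(t)}_m,\ \hat G_k=\sum_{m>k}\hat g_m.\] *)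

theory Defs
  imports Complex_Main "HOL-Library.FuncSet"
begin

definition trans_Z :: "(nat \<Rightarrow> nat \<Rightarrow> real) \<Rightarrow> nat \<Rightarrow> nat \<Rightarrow> nat \<Rightarrow> real" where
  "trans_Z \<alpha> t i j =
     (if i = 0 then (if j = 0 then \<alpha> t 0 else if j = 1 then 1 - \<alpha> t 0 else 0)
      else (if j = i - 1 then \<alpha> t i else if j = i + 1 then 1 - \<alpha> t i else 0))"

definition trans_hatZ :: "real \<Rightarrow> nat \<Rightarrow> nat \<Rightarrow> nat \<Rightarrow> real" where
  "trans_hatZ p t i j =
     (if i = 0 then (if j = 1 then 1 else 0)
      else (if j = i - 1 then p else if j = i + 1 then 1 - p else 0))"

text \<open>Computed as the sum over all paths of the product of
  transition probabilities; paths of such a chain started at 0 stay in {0..n}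
  during n steps, so the path sum is over {..n}-valued paths.\<close>
definition first_return :: "(nat \<Rightarrow> nat \<Rightarrow> nat \<Rightarrow> real) \<Rightarrow> nat \<Rightarrow> nat \<Rightarrow> real" where
  "first_return P t n =
     (\<Sum>x\<in>{x \<in> PiE {..n} (\<lambda>_. {..n}). x 0 = 0 \<and> x n = 0 \<and> (\<forall>k\<in>{1..<n}. x k \<noteq> 0)}.
        \<Prod>k<n. P (t + k) (x k) (x (Suc k)))"

definition g_Z :: "(nat \<Rightarrow> nat \<Rightarrow> real) \<Rightarrow> nat \<Rightarrow> nat \<Rightarrow> real" where
  "g_Z \<alpha> t n = first_return (trans_Z \<alpha>) t n"

definition f_hat :: "real \<Rightarrow> nat \<Rightarrow> real" where
  "f_hat p n = first_return (trans_hatZ p) 0 n"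

definition g_hat :: "real \<Rightarrow> nat \<Rightarrow> real" where
  "g_hat p n = (if n = 1 then 1 else f_hat p n / p)"

definition G_Z :: "(nat \<Rightarrow> nat \<Rightarrow> real) \<Rightarrow> nat \<Rightarrow> nat \<Rightarrow> real" where
  "G_Z \<alpha> t k = (\<Sum>j. g_Z \<alpha> t (k + 1 + j))"

definition G_hat :: "real \<Rightarrow> nat \<Rightarrow> real" where
  "G_hat p k = (\<Sum>j. g_hat p (k + 1 + j))"

end

theory Submission
  imports Defs
begin

lemma path_sum_le:
  fixes w :: "nat \<Rightarrow> nat \<Rightarrow> nat \<Rightarrow> real" and \<beta> :: "nat \<Rightarrow> real"
  assumes V: "finite V" and w0: "\<And>k i j. 0 \<le> w k i j"
    and ws: "\<And>k i. (\<Sum>j\<in>V. w k i j) \<le> 1" and b0: "\<And>i. 0 \<le> \<beta> i"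
  shows "(\<Sum>x\<in>PiE {..n} (\<lambda>_. V). \<beta> (x 0) * (\<Prod>k<n. w k (x k) (x (Suc k)))) \<le> (\<Sum>i\<in>V. \<beta> i)"
proof (induction n)
  case 0
  have e: "{..0::nat} = insert 0 {}" by auto
  have "(\<Sum>x\<in>PiE {..0} (\<lambda>_. V). \<beta> (x 0) * (\<Prod>k<0. w k (x k) (x (Suc k))))
      = (\<Sum>z\<in>V \<times> PiE {} (\<lambda>_. V). (\<lambda>x. \<beta> (x 0) * (\<Prod>k<0. w k (x k) (x (Suc k)))) (((\<lambda>(y, g). g(0 := y)) z)))"
    unfolding e PiE_insert_eq
    by (subst sum.reindex[OF inj_combinator]) auto
  also have "\<dots> = (\<Sum>(y,g)\<in>V \<times> PiE ({}::nat set) (\<lambda>_. V). \<beta> y)"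
    by (auto intro!: sum.cong)
  also have "\<dots> = (\<Sum>i\<in>V. \<beta> i)"
    by (simp add: sum.cartesian_product[symmetric])
  finally show ?case by simp
next
  case (Suc n)
  let ?F = "\<lambda>x. \<beta> (x 0) * (\<Prod>k<n. w k (x k) (x (Suc k)))"
  have e: "{..Suc n} = insert (Suc n) {..n}" by auto
  have hp: "\<And>g y. (\<Prod>k<n. w k ((g(Suc n := y)) k) ((g(Suc n := y)) (Suc k))) = (\<Prod>k<n. w k (g k) (g (Suc k)))"
    by (rule prod.cong) auto
  have "(\<Sum>x\<in>PiE {..Suc n} (\<lambda>_. V). \<beta> (x 0) * (\<Prod>k<Suc n. w k (x k) (x (Suc k))))
      = (\<Sum>z\<in>V \<times> PiE {..n} (\<lambda>_. V). (\<lambda>x. \<beta> (x 0) * (\<Prod>k<Suc n. w k (x k) (x (Suc k)))) (((\<lambda>(y, g). g(Suc n := y)) z)))"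
    unfolding e PiE_insert_eq
    by (subst sum.reindex[OF inj_combinator]) auto
  also have "\<dots> = (\<Sum>(y,g)\<in>V \<times> PiE {..n} (\<lambda>_. V). ?F g * w n (g n) y)"
    using hp by (auto intro!: sum.cong)
  also have "\<dots> = (\<Sum>y\<in>V. \<Sum>g\<in>PiE {..n} (\<lambda>_. V). ?F g * w n (g n) y)"
    by (simp add: sum.cartesian_product[symmetric])
  also have "\<dots> = (\<Sum>g\<in>PiE {..n} (\<lambda>_. V). ?F g * (\<Sum>y\<in>V. w n (g n) y))"
    by (simp add: sum_distrib_left sum.swap[of _ V])
  also have "\<dots> \<le> (\<Sum>g\<in>PiE {..n} (\<lambda>_. V). ?F g)"
    by (rule sum_mono) (use ws b0 w0 in \<open>auto intro!: mult_left_le prod_nonneg mult_nonneg_nonneg\<close>)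
  also have "\<dots> \<le> (\<Sum>i\<in>V. \<beta> i)" by (rule Suc.IH)
  finally show ?case .
qed

definition FRset :: "nat \<Rightarrow> (nat \<Rightarrow> nat) set" where
  "FRset n = {x \<in> PiE {..n} (\<lambda>_. {..n}). x 0 = 0 \<and> x n = 0 \<and> (\<forall>k\<in>{1..<n}. x k \<noteq> 0)}"

lemma first_return_FR: "first_return P t n = (\<Sum>x\<in>FRset n. \<Prod>k<n. P (t + k) (x k) (x (Suc k)))"
  unfolding first_return_def FRset_def by simp

lemma finite_FR: "finite (FRset n)"
  unfolding FRset_def by (rule finite_subset[of _ "PiE {..n} (\<lambda>_. {..n})"]) (auto intro: finite_PiE)

lemma FR_sum_le:
  fixes w :: "nat \<Rightarrow> nat \<Rightarrow> nat \<Rightarrow> real"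
  assumes w0: "\<And>k i j. 0 \<le> w k i j"
    and ws: "\<And>k i. (\<Sum>j\<in>{..n}. w k i j) \<le> 1"
  shows "(\<Sum>x\<in>FRset n. \<Prod>k<n. w k (x k) (x (Suc k))) \<le> 1"
proof -
  let ?\<beta> = "\<lambda>i::nat. if i = 0 then 1 else (0::real)"
  have "(\<Sum>x\<in>FRset n. \<Prod>k<n. w k (x k) (x (Suc k))) = (\<Sum>x\<in>FRset n. ?\<beta> (x 0) * (\<Prod>k<n. w k (x k) (x (Suc k))))"
    by (rule sum.cong) (auto simp: FRset_def)
  also have "\<dots> \<le> (\<Sum>x\<in>PiE {..n} (\<lambda>_. {..n}). ?\<beta> (x 0) * (\<Prod>k<n. w k (x k) (x (Suc k))))"
    by (rule sum_mono2) (auto simp: FRset_def w0 prod_nonneg intro!: finite_PiE)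
  also have "\<dots> \<le> (\<Sum>i\<in>{..n}. ?\<beta> i)"
    by (rule path_sum_le) (use w0 ws in auto)
  also have "\<dots> = 1" by simp
  finally show ?thesis .
qed

lemma trans_Z_nonneg:
  assumes "\<And>t i. 0 \<le> \<alpha> t i \<and> \<alpha> t i \<le> 1"
  shows "0 \<le> trans_Z \<alpha> t i j"
  using assms[of t i] assms[of t 0] unfolding trans_Z_def by auto

lemma trans_hatZ_nonneg:
  assumes "0 \<le> p" "p \<le> 1"
  shows "0 \<le> trans_hatZ p t i j"
  using assms unfolding trans_hatZ_def by auto

lemma trans_Z_rowsum:
  assumes a: "\<And>t i. 0 \<le> \<alpha> t i \<and> \<alpha> t i \<le> 1" and V: "finite V"
  shows "(\<Sum>j\<in>V. trans_Z \<alpha> t i j) \<le> 1"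
proof -
  define a where "a = (if i = 0 then 0 else i - 1)"
  define b where "b = (if i = 0 then 1 else i + 1)"
  have "(\<Sum>j\<in>V. trans_Z \<alpha> t i j) \<le> (\<Sum>j\<in>V. (if j = a then \<alpha> t i else 0) + (if j = b then 1 - \<alpha> t i else 0))"
    by (rule sum_mono) (use a[of t i] in \<open>auto simp: trans_Z_def a_def b_def\<close>)
  also have "\<dots> \<le> 1"
    using a[of t i] V by (simp add: sum.distrib)
  finally show ?thesis .
qed

definition wsym :: "nat \<Rightarrow> nat \<Rightarrow> real" where
  "wsym i j = (if j = Suc i then 1/2 else 0) + (if i = 0 then 0 else (if j = i - 1 then 1/2 else 0))"

lemma wsym_nonneg: "0 \<le> wsym i j" unfolding wsym_def by auto

lemma wsym_rowsum: assumes V: "finite V" shows "(\<Sum>j\<in>V. wsym i j) \<le> 1"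
  using V unfolding wsym_def by (cases i) (simp_all add: sum.distrib)

lemma g_Z_le1:
  assumes a: "\<And>t i. 0 \<le> \<alpha> t i \<and> \<alpha> t i \<le> 1"
  shows "g_Z \<alpha> t n \<le> 1"
  unfolding g_Z_def first_return_FR
  by (rule FR_sum_le) (use a trans_Z_nonneg trans_Z_rowsum in auto)

lemma g_Z_nonneg:
  assumes a: "\<And>t i. 0 \<le> \<alpha> t i \<and> \<alpha> t i \<le> 1"
  shows "0 \<le> g_Z \<alpha> t n"
  unfolding g_Z_def first_return_FR
  by (intro sum_nonneg prod_nonneg) (use a trans_Z_nonneg in auto)

lemma f_hat_nonneg:
  assumes "0 \<le> p" "p \<le> 1"
  shows "0 \<le> f_hat p n"
  unfolding f_hat_def first_return_FR
  by (intro sum_nonneg prod_nonneg) (use assms trans_hatZ_nonneg in auto)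

lemma telescope_pow:
  fixes \<rho> :: real
  assumes "x 0 = 0" "x n = 0"
  shows "(\<Prod>k<n. \<rho> ^ x (Suc k)) = (\<Prod>k<n. \<rho> ^ x k)"
proof -
  have "(\<Prod>k<Suc n. \<rho> ^ x k) = (\<Prod>k<n. \<rho> ^ x k) * \<rho> ^ x n" by simp
  moreover have "(\<Prod>k<Suc n. \<rho> ^ x k) = \<rho> ^ x 0 * (\<Prod>k<n. \<rho> ^ x (Suc k))"
    by (rule prod.lessThan_Suc_shift)
  ultimately show ?thesis using assms by simp
qed

lemma FR_facts:
  assumes "x \<in> FRset n"
  shows "x 0 = 0" "x n = 0" "\<And>k. 1 \<le> k \<Longrightarrow> k < n \<Longrightarrow> x k \<noteq> 0"
  using assms unfolding FRset_def by auto

lemma rho_exists: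
  fixes \<alpha> :: "nat \<Rightarrow> nat \<Rightarrow> real" and p :: real
  assumes alpha_prob: "\<And>t i. 0 \<le> \<alpha> t i \<and> \<alpha> t i \<le> 1"
    and p1: "p < 1" and p_gt: "p > 1/2"
    and cond: "\<And>t s i j. p * (1 - p) \<ge> (1 - \<alpha> t i) * \<alpha> s j"
  shows "\<exists>\<rho>>0. (\<forall>t i. 1 - \<alpha> t i \<le> (1-p)*\<rho>) \<and> (\<forall>t i. \<alpha> t i * \<rho> \<le> p)"
proof -
  define S where "S = {1 - \<alpha> t i | t i. True}"
  define a where "a = Sup S"
  define q where "q = p * (1 - p)"
  have q0: "q > 0" unfolding q_def using p1 p_gt by simp
  have bdd: "bdd_above S" unfolding S_def using alpha_prob by (auto intro!: bdd_aboveI[of _ 1])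
  have ua: "1 - \<alpha> t i \<le> a" for t i
    unfolding a_def by (rule cSup_upper[OF _ bdd]) (auto simp: S_def)
  have da: "\<alpha> s j * a \<le> q" for s j
  proof (cases "\<alpha> s j = 0")
    case True then show ?thesis using q0 by simp
  next
    case False
    then have pos: "\<alpha> s j > 0" using alpha_prob[of s j] by simp
    have "a \<le> q / \<alpha> s j" unfolding a_def
    proof (rule cSup_least)
      show "S \<noteq> {}" unfolding S_def by auto
      fix u assume "u \<in> S"
      then obtain t i where u: "u = 1 - \<alpha> t i" unfolding S_def by auto
      show "u \<le> q / \<alpha> s j" unfolding u using cond[of t i s j] pos
        by (simp add: pos_le_divide_eq q_def)
    qed
    then show ?thesis using pos by (simp add: pos_le_divide_eq mult.commute)
  qed
  define a' where "a' = max a q"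
  define \<rho> where "\<rho> = a' / (1 - p)"
  have a'0: "a' > 0" unfolding a'_def using q0 by simp
  have "\<rho> > 0" unfolding \<rho>_def using a'0 p1 by simp
  moreover have "1 - \<alpha> t i \<le> (1-p)*\<rho>" for t i
    unfolding \<rho>_def using p1 ua[of t i] by (simp add: a'_def)
  moreover have "\<alpha> t i * \<rho> \<le> p" for t i
  proof -
    have "\<alpha> t i * a' \<le> q"
    proof (cases "a \<le> q")
      case True then show ?thesis unfolding a'_def using alpha_prob[of t i] q0
        by (simp add: mult_left_le_one_le)
    next
      case False then show ?thesis unfolding a'_def using da[of t i] by simp
    qed
    then show ?thesis unfolding \<rho>_def q_def using p1
      by (simp add: field_simps)
  qed
  ultimately show ?thesis by blast
qed

lemma step_pos:
  assumes r: "\<rho> > 0" and hu: "1 - \<alpha> t i \<le> (1-p)*\<rho>" and hd: "\<alpha> t i * \<rho> \<le> p"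
    and i: "i \<noteq> 0" and a: "0 \<le> \<alpha> t i"
  shows "trans_Z \<alpha> t i j * \<rho>^i \<le> trans_hatZ p s i j * \<rho>^j"
proof -
  obtain m where m: "i = Suc m" using i by (cases i) auto
  have "\<alpha> t i * \<rho> ^ i \<le> p * \<rho> ^ m"
  proof -
    have "\<alpha> t i * \<rho> ^ i = (\<alpha> t i * \<rho>) * \<rho> ^ m" by (simp add: m)
    also have "\<dots> \<le> p * \<rho> ^ m" by (rule mult_right_mono[OF hd]) (use r in simp)
    finally show ?thesis .
  qed
  moreover have "(1 - \<alpha> t i) * \<rho> ^ i \<le> (1 - p) * \<rho> ^ Suc i"
  proof -
    have "(1 - \<alpha> t i) * \<rho> ^ i \<le> ((1-p)*\<rho>) * \<rho> ^ i" by (rule mult_right_mono[OF hu]) (use r in simp)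
    then show ?thesis by (simp add: mult.assoc)
  qed
  ultimately show ?thesis using i m unfolding trans_Z_def trans_hatZ_def by auto
qed

lemma step_zero:
  assumes hu: "1 - \<alpha> t 0 \<le> (1-p)*\<rho>" and j: "j \<noteq> 0"
  shows "trans_Z \<alpha> t 0 j * \<rho>^0 \<le> (1 - p) * trans_hatZ p s 0 j * \<rho>^j"
  using hu j unfolding trans_Z_def trans_hatZ_def by auto

lemma path_Z_le:
  fixes \<alpha> :: "nat \<Rightarrow> nat \<Rightarrow> real" and p \<rho> :: real
  assumes r: "\<rho> > 0" and hu: "\<And>t i. 1 - \<alpha> t i \<le> (1-p)*\<rho>" and hd: "\<And>t i. \<alpha> t i * \<rho> \<le> p"
    and a: "\<And>t i. 0 \<le> \<alpha> t i \<and> \<alpha> t i \<le> 1"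
    and x: "x \<in> FRset n" and n2: "2 \<le> n"
  shows "(\<Prod>k<n. trans_Z \<alpha> (t+k) (x k) (x (Suc k))) \<le> (1-p) * (\<Prod>k<n. trans_hatZ p (0+k) (x k) (x (Suc k)))"
proof -
  let ?c = "\<lambda>k::nat. if k = 0 then 1 - p else 1"
  let ?Z = "\<lambda>k. trans_Z \<alpha> (t+k) (x k) (x (Suc k))"
  let ?H = "\<lambda>k. trans_hatZ p (0+k) (x k) (x (Suc k))"
  have st: "0 \<le> ?Z k * \<rho>^(x k) \<and> ?Z k * \<rho>^(x k) \<le> ?c k * ?H k * \<rho>^(x (Suc k))" if k: "k \<in> {..<n}" for k
  proof
    show "0 \<le> ?Z k * \<rho>^(x k)" using trans_Z_nonneg[OF a] r by simp
  next
    show "?Z k * \<rho>^(x k) \<le> ?c k * ?H k * \<rho>^(x (Suc k))"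
    proof (cases "k = 0")
      case True
      have "x 1 \<noteq> 0" using FR_facts(3)[OF x, of 1] n2 by simp
      then show ?thesis using True step_zero[where \<alpha>=\<alpha> and t=t and p=p and \<rho>=\<rho> and j="x 1" and s=0, OF hu] FR_facts(1)[OF x] by simp
    next
      case False
      have "x k \<noteq> 0" using FR_facts(3)[OF x, of k] False k by simp
      then show ?thesis using False step_pos[where \<alpha>=\<alpha> and t="t+k" and p=p and \<rho>=\<rho> and i="x k" and j="x (Suc k)" and s="0+k", OF r hu hd] a by simp
    qed
  qed
  have "(\<Prod>k<n. ?Z k * \<rho>^(x k)) \<le> (\<Prod>k<n. ?c k * ?H k * \<rho>^(x (Suc k)))"
    by (rule prod_mono) (use st in blast)
  moreover have "(\<Prod>k<n. ?Z k * \<rho>^(x k)) = (\<Prod>k<n. ?Z k) * (\<Prod>k<n. \<rho>^(x k))"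
    by (rule prod.distrib)
  moreover have "(\<Prod>k<n. ?c k * ?H k * \<rho>^(x (Suc k))) = (\<Prod>k<n. ?c k) * (\<Prod>k<n. ?H k) * (\<Prod>k<n. \<rho>^(x k))"
    using telescope_pow[of x n \<rho>] FR_facts(1,2)[OF x] by (simp add: prod.distrib)
  moreover have "(\<Prod>k<n. ?c k) = 1 - p" using n2 by simp
  moreover have "(\<Prod>k<n. \<rho>^(x k)) > 0" using r by (simp add: prod_pos)
  ultimately show ?thesis by simp
qed

lemma path_Z_zero:
  fixes \<alpha> :: "nat \<Rightarrow> nat \<Rightarrow> real"
  assumes a: "\<And>t i. 0 \<le> \<alpha> t i \<and> \<alpha> t i \<le> 1"
    and cond: "\<And>t s i j. (1 - \<alpha> t i) * \<alpha> s j \<le> 0"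
    and x: "x \<in> FRset n" and n2: "2 \<le> n"
  shows "(\<Prod>k<n. trans_Z \<alpha> (t+k) (x k) (x (Suc k))) = 0"
proof -
  have x1: "x 1 \<noteq> 0" using FR_facts(3)[OF x, of 1] n2 by simp
  have xn1: "x (n - 1) \<noteq> 0" using FR_facts(3)[OF x, of "n-1"] n2 by simp
  have sn: "Suc (n - 1) = n" using n2 by simp
  have "(\<forall>t i. \<alpha> t i = 0) \<or> (\<forall>t i. \<alpha> t i = 1)"
  proof (cases "\<forall>t i. \<alpha> t i = 0")
    case False
    then obtain s j where "\<alpha> s j \<noteq> 0" by auto
    then have pos: "\<alpha> s j > 0" using a[of s j] by simp
    have "\<alpha> t i = 1" for t i
    proof -
      have "(1 - \<alpha> t i) * \<alpha> s j \<le> 0" by (rule cond)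
      then have "1 - \<alpha> t i \<le> 0" using pos by (simp add: mult_le_0_iff)
      then show ?thesis using a[of t i] by simp
    qed
    then show ?thesis by blast
  qed simp
  then show ?thesis
  proof
    assume h: "\<forall>t i. \<alpha> t i = 0"
    have "trans_Z \<alpha> (t + (n-1)) (x (n-1)) (x (Suc (n-1))) = 0"
      unfolding sn FR_facts(2)[OF x] trans_Z_def using xn1 h by auto
    moreover have "n - 1 \<in> {..<n}" using n2 by simp
    ultimately show ?thesis by (auto simp only: prod_zero_iff finite_lessThan)
  next
    assume h: "\<forall>t i. \<alpha> t i = 1"
    have "trans_Z \<alpha> (t + 0) (x 0) (x (Suc 0)) = 0"
      unfolding FR_facts(1)[OF x] trans_Z_def using x1 h by auto
    moreover have "0 \<in> {..<n}" using n2 by simp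
    ultimately show ?thesis by (auto simp only: prod_zero_iff finite_lessThan)
  qed
qed

lemma g_le_ghat:
  fixes \<alpha> :: "nat \<Rightarrow> nat \<Rightarrow> real" and p :: real
  assumes alpha_prob: "\<And>t i. 0 \<le> \<alpha> t i \<and> \<alpha> t i \<le> 1"
    and p_le: "p \<le> 1"
    and p_gt: "p > 1/2"
    and cond: "\<And>t s i j. p * (1 - p) \<ge> (1 - \<alpha> t i) * \<alpha> s j"
    and n2: "2 \<le> n"
  shows "g_Z \<alpha> t n \<le> g_hat p n"
proof -
  have pp: "0 < p" using p_gt by simp
  have path: "(\<Prod>k<n. trans_Z \<alpha> (t+k) (x k) (x (Suc k))) \<le> (\<Prod>k<n. trans_hatZ p (0+k) (x k) (x (Suc k))) / p"
    if x: "x \<in> FRset n" for x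
  proof -
    have H0: "0 \<le> (\<Prod>k<n. trans_hatZ p (0+k) (x k) (x (Suc k)))"
      by (intro prod_nonneg) (use trans_hatZ_nonneg p_le pp in auto)
    show ?thesis
    proof (cases "p < 1")
      case True
      obtain \<rho> where r: "\<rho> > 0" and hu: "\<And>t i. 1 - \<alpha> t i \<le> (1-p)*\<rho>" and hd: "\<And>t i. \<alpha> t i * \<rho> \<le> p"
      proof -
        have "\<exists>\<rho>>0. (\<forall>t i. 1 - \<alpha> t i \<le> (1-p)*\<rho>) \<and> (\<forall>t i. \<alpha> t i * \<rho> \<le> p)"
          by (rule rho_exists) (use alpha_prob True p_gt cond in auto)
        then show ?thesis using that by blast
      qed
      have "(\<Prod>k<n. trans_Z \<alpha> (t+k) (x k) (x (Suc k))) \<le> (1-p) * (\<Prod>k<n. trans_hatZ p (0+k) (x k) (x (Suc k)))"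
        by (rule path_Z_le[OF r hu hd alpha_prob x n2])
      also have "\<dots> \<le> (\<Prod>k<n. trans_hatZ p (0+k) (x k) (x (Suc k))) / p"
      proof -
        have "(1 - p) \<le> 1 / p" using pp p_le by (simp add: field_simps) (smt (verit) mult_nonneg_nonneg)
        then show ?thesis using H0 by (metis mult_right_mono mult.commute times_divide_eq_right mult_1)
      qed
      finally show ?thesis .
    next
      case False
      then have "p = 1" using p_le by simp
      then have c0: "\<And>t s i j. (1 - \<alpha> t i) * \<alpha> s j \<le> 0" using cond by (metis diff_self mult_zero_right)
      have "(\<Prod>k<n. trans_Z \<alpha> (t+k) (x k) (x (Suc k))) = 0"
        by (rule path_Z_zero) (use alpha_prob c0 x n2 in auto)
      moreover have "0 \<le> (\<Prod>k<n. trans_hatZ p (0+k) (x k) (x (Suc k))) / p" using H0 pp by simp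
      ultimately show ?thesis by linarith
    qed
  qed
  have "g_Z \<alpha> t n \<le> (\<Sum>x\<in>FRset n. (\<Prod>k<n. trans_hatZ p (0+k) (x k) (x (Suc k))) / p)"
    unfolding g_Z_def first_return_FR by (rule sum_mono) (rule path)
  also have "\<dots> = f_hat p n / p"
    unfolding f_hat_def first_return_FR by (simp add: sum_divide_distrib)
  finally show ?thesis unfolding g_hat_def using n2 by simp
qed

lemma hat_step_pos:
  fixes \<mu> c p :: real
  assumes m: "\<mu> > 0" and c: "c > 0" and hu: "1 - p \<le> c * \<mu>" and hd: "p * \<mu> \<le> c"
    and i: "i \<noteq> 0"
  shows "trans_hatZ p s i j * \<mu>^i \<le> 2 * c * wsym i j * \<mu>^j"
proof -
  obtain m' where m': "i = Suc m'" using i by (cases i) auto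
  have A: "p * \<mu> ^ i \<le> c * \<mu> ^ m'"
  proof -
    have "p * \<mu> ^ i = (p * \<mu>) * \<mu> ^ m'" by (simp add: m')
    also have "\<dots> \<le> c * \<mu> ^ m'" by (rule mult_right_mono[OF hd]) (use m in simp)
    finally show ?thesis .
  qed
  have B: "(1 - p) * \<mu> ^ i \<le> c * \<mu> ^ Suc i"
  proof -
    have "(1 - p) * \<mu> ^ i \<le> (c * \<mu>) * \<mu> ^ i" by (rule mult_right_mono[OF hu]) (use m in simp)
    then show ?thesis by (simp add: mult.assoc)
  qed
  have w1: "wsym i m' = 1/2" "wsym i (Suc i) = 1/2" unfolding wsym_def using m' by auto
  have T: "trans_hatZ p s i j = (if j = m' then p else if j = Suc i then 1 - p else 0)"
    using m' by (simp add: trans_hatZ_def)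
  show ?thesis
  proof (cases "j = m'")
    case True
    have e: "2 * c * wsym i j * \<mu>^j = c * \<mu> ^ m'" using True w1 by simp
    have "trans_hatZ p s i j * \<mu>^i = p * \<mu>^i" using T True by simp
    also have "\<dots> \<le> c * \<mu> ^ m'" by (rule A)
    also have "\<dots> = 2 * c * wsym i j * \<mu>^j" by (rule e[symmetric])
    finally show ?thesis .
  next
    case F1: False
    show ?thesis
    proof (cases "j = Suc i")
      case True
      have e: "2 * c * wsym i j * \<mu>^j = c * \<mu> ^ Suc i" using True w1 by simp
      have "trans_hatZ p s i j * \<mu>^i = (1 - p) * \<mu>^i" using T True F1 by simp
      also have "\<dots> \<le> c * \<mu> ^ Suc i" by (rule B)
      also have "\<dots> = 2 * c * wsym i j * \<mu>^j" by (rule e[symmetric])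
      finally show ?thesis .
    next
      case False
      then show ?thesis using T F1 c m wsym_nonneg[of i j] by simp
    qed
  qed
qed

lemma hat_step_zero:
  fixes \<mu> c p :: real
  assumes m: "\<mu> > 0" and c: "c > 0"
  shows "trans_hatZ p s 0 j * \<mu>^0 \<le> (1/(c*\<mu>)) * (2 * c) * wsym 0 j * \<mu>^j"
proof (cases "j = 1")
  case True
  then show ?thesis using m c unfolding trans_hatZ_def wsym_def by (simp add: field_simps)
next
  case False
  then show ?thesis using m c wsym_nonneg[of 0 j] unfolding trans_hatZ_def by simp
qed

lemma path_hat_le:
  fixes \<mu> c p :: real
  assumes m: "\<mu> > 0" and c: "c > 0" and hu: "1 - p \<le> c * \<mu>" and hd: "p * \<mu> \<le> c"
    and p0: "0 \<le> p" and p1: "p \<le> 1"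
    and x: "x \<in> FRset n" and n1: "1 \<le> n"
  shows "(\<Prod>k<n. trans_hatZ p (0+k) (x k) (x (Suc k))) \<le> (1/(c*\<mu>)) * (2*c)^n * (\<Prod>k<n. wsym (x k) (x (Suc k)))"
proof -
  let ?d = "\<lambda>k::nat. if k = 0 then 1/(c*\<mu>) else 1"
  let ?H = "\<lambda>k. trans_hatZ p (0+k) (x k) (x (Suc k))"
  let ?W = "\<lambda>k. wsym (x k) (x (Suc k))"
  have st: "0 \<le> ?H k * \<mu>^(x k) \<and> ?H k * \<mu>^(x k) \<le> ?d k * (2*c) * ?W k * \<mu>^(x (Suc k))" if k: "k \<in> {..<n}" for k
  proof
    show "0 \<le> ?H k * \<mu>^(x k)" using trans_hatZ_nonneg[OF p0 p1] m by simp
  next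
    show "?H k * \<mu>^(x k) \<le> ?d k * (2*c) * ?W k * \<mu>^(x (Suc k))"
    proof (cases "k = 0")
      case True
      then show ?thesis using hat_step_zero[OF m c, of p 0 "x 1"] FR_facts(1)[OF x] by simp
    next
      case False
      have "x k \<noteq> 0" using FR_facts(3)[OF x, of k] False k by simp
      then show ?thesis using False hat_step_pos[OF m c hu hd, of "x k" "0+k" "x (Suc k)"] by simp
    qed
  qed
  define E where "E = (\<Prod>k<n. \<mu>^(x k))"
  define R where "R = (1/(c*\<mu>)) * (2*c)^n * (\<Prod>k<n. ?W k)"
  have "(\<Prod>k<n. ?H k * \<mu>^(x k)) \<le> (\<Prod>k<n. ?d k * (2*c) * ?W k * \<mu>^(x (Suc k)))"
    by (rule prod_mono) (use st in blast)
  moreover have "(\<Prod>k<n. ?H k * \<mu>^(x k)) = (\<Prod>k<n. ?H k) * E"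
    unfolding E_def by (rule prod.distrib)
  moreover have "(\<Prod>k<n. ?d k) = 1/(c*\<mu>)" using n1 by simp
  moreover have "(\<Prod>k<n. ?d k * (2*c) * ?W k * \<mu>^(x (Suc k))) = (\<Prod>k<n. ?d k) * (2*c)^n * (\<Prod>k<n. ?W k) * E"
    unfolding E_def using telescope_pow[of x n \<mu>] FR_facts(1,2)[OF x] by (simp add: prod.distrib)
  ultimately have "(\<Prod>k<n. ?H k) * E \<le> R * E" unfolding R_def by simp
  moreover have "E > 0" unfolding E_def using m by (simp add: prod_pos)
  ultimately have "(\<Prod>k<n. ?H k) \<le> R" by simp
  then show ?thesis unfolding R_def .
qed

lemma f_hat_geom:
  fixes p :: real
  assumes p_le: "p \<le> 1" and p_gt: "p > 1/2"
  shows "\<exists>K r. 0 \<le> K \<and> 0 \<le> r \<and> r < 1 \<and> (\<forall>n\<ge>1. f_hat p n \<le> K * r^n)"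
proof -
  define \<mu> where "\<mu> = (1 - p) + 1 / (4 * p)"
  define c where "c = max ((1-p)/\<mu>) (p*\<mu>)"
  have pp: "p > 0" using p_gt by simp
  have sq: "4 * p * (1 - p) < 1"
  proof -
    have "0 < (2*p - 1)^2" using p_gt by simp
    then show ?thesis by (simp add: power2_eq_square algebra_simps)
  qed
  have m: "\<mu> > 0" unfolding \<mu>_def using p_le pp by (simp add: add_nonneg_pos)
  have m1: "2 * (1 - p) < \<mu>"
  proof -
    have "1 - p < 1 / (4*p)" using sq pp by (simp add: field_simps)
    then show ?thesis unfolding \<mu>_def by simp
  qed
  have m2: "p * \<mu> < 1/2"
  proof -
    have "p * \<mu> = p * (1 - p) + 1/4" unfolding \<mu>_def using pp by (simp add: field_simps)
    then show ?thesis using sq by simp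
  qed
  have c0: "c > 0" unfolding c_def using m pp by (simp add: max.strict_coboundedI2)
  have c1: "2 * c < 1"
  proof -
    have A: "(1-p)/\<mu> < 1/2" using m1 m by (simp add: field_simps)
    have "c < 1/2" unfolding c_def max_less_iff_conj using A m2 by blast
    then show ?thesis by simp
  qed
  have hu: "1 - p \<le> c * \<mu>"
  proof -
    have "(1-p)/\<mu> \<le> c" unfolding c_def by simp
    then show ?thesis using m by (simp add: field_simps)
  qed
  have hd: "p * \<mu> \<le> c" unfolding c_def by simp
  define K where "K = 1/(c*\<mu>)"
  have K0: "0 \<le> K" unfolding K_def using c0 m by simp
  have "f_hat p n \<le> K * (2*c)^n" if n1: "1 \<le> n" for n
  proof -
    have "f_hat p n = (\<Sum>x\<in>FRset n. \<Prod>k<n. trans_hatZ p (0+k) (x k) (x (Suc k)))"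
      unfolding f_hat_def first_return_FR by simp
    also have "\<dots> \<le> (\<Sum>x\<in>FRset n. K * (2*c)^n * (\<Prod>k<n. wsym (x k) (x (Suc k))))"
      by (rule sum_mono) (use path_hat_le[OF m c0 hu hd _ p_le _ n1] pp in \<open>auto simp: K_def\<close>)
    also have "\<dots> = K * (2*c)^n * (\<Sum>x\<in>FRset n. \<Prod>k<n. wsym (x k) (x (Suc k)))"
      by (simp add: sum_distrib_left)
    also have "\<dots> \<le> K * (2*c)^n * 1"
    proof (rule mult_left_mono)
      show "(\<Sum>x\<in>FRset n. \<Prod>k<n. wsym (x k) (x (Suc k))) \<le> 1"
        using FR_sum_le[of "\<lambda>_. wsym" n] wsym_nonneg wsym_rowsum by auto
      show "0 \<le> K * (2*c)^n" using K0 c0 by simp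
    qed
    finally show ?thesis by simp
  qed
  then show ?thesis using K0 c0 c1 by (intro exI[of _ K] exI[of _ "2*c"]) auto
qed

theorem lemma2:
  fixes \<alpha> :: "nat \<Rightarrow> nat \<Rightarrow> real" and p :: real
  assumes alpha_prob: "\<And>t i. 0 \<le> \<alpha> t i \<and> \<alpha> t i \<le> 1"
    and p_le: "p \<le> 1"
    and p_gt: "p > 1/2"
    and cond: "\<And>t s i j. p * (1 - p) \<ge> (1 - \<alpha> t i) * \<alpha> s j"
  shows "\<forall>t k. G_Z \<alpha> t k \<le> G_hat p k"
proof (intro allI)
  fix t k
  have pp: "p > 0" using p_gt by simp
  obtain K r where K0: "0 \<le> K" and r0: "0 \<le> r" and r1: "r < 1"
    and bd: "\<And>n. 1 \<le> n \<Longrightarrow> f_hat p n \<le> K * r^n"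
    using f_hat_geom[OF p_le p_gt] by blast
  have gh0: "0 \<le> g_hat p n" for n
    unfolding g_hat_def using f_hat_nonneg[of p n] pp p_le by simp
  have ghb: "g_hat p (n+2) \<le> (K/p) * r^(n+2)" for n
    unfolding g_hat_def using bd[of "n+2"] pp by (simp add: divide_right_mono)
  have "summable (\<lambda>n. (K/p) * r^(n+2))"
    by (rule summable_mult) (simp add: summable_iff_shift[of "\<lambda>n. r^n" 2] summable_geometric r0 r1)
  then have "summable (\<lambda>n. g_hat p (n+2))"
    by (rule summable_comparison_test') (use gh0 ghb in simp)
  then have Sg: "summable (g_hat p)" by (simp only: summable_iff_shift)
  have S1: "summable (\<lambda>j. g_hat p (k+1+j))"
    using Sg summable_iff_shift[of "g_hat p" "k+1"] by (simp add: add.commute add.left_commute)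
  have le: "g_Z \<alpha> t (k+1+j) \<le> g_hat p (k+1+j)" for j
  proof (cases "k + 1 + j \<ge> 2")
    case True
    show ?thesis by (rule g_le_ghat) (use alpha_prob p_le p_gt cond True in auto)
  next
    case False
    then have "k + 1 + j = 1" by simp
    moreover have "g_Z \<alpha> t 1 \<le> 1" by (rule g_Z_le1) (use alpha_prob in auto)
    ultimately show ?thesis by (simp add: g_hat_def)
  qed
  have gz0: "0 \<le> g_Z \<alpha> t n" for n by (rule g_Z_nonneg) (use alpha_prob in auto)
  have S2: "summable (\<lambda>j. g_Z \<alpha> t (k+1+j))"
    by (rule summable_comparison_test'[OF S1]) (use le gz0 in simp)
  show "G_Z \<alpha> t k \<le> G_hat p k"
    unfolding G_Z_def G_hat_def by (rule suminf_le[OF le S2 S1])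
qed

end
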